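(* Let $(\vdash,\overline{\cdot},\widehat{\cdot})$ be a setting satisfying Pre-Relevance, let $\mathcal{S}_1,\mathcal{S}_2\subseteq\mathcal{L}$ with $\mathcal{S}_1\mid\mathcal{S}_2$, and let $a,b\in\mathit{Arg}_{\vdash}(\mathcal{S}_1\cup\mathcal{S}_2)$ with $\mathsf{Supp}(b)=\Theta$ such that $b$ attacks $a$. Then: (1) some $b'\in\mathit{Arg}_{\vdash}(\mathcal{S}_1\cap\Theta)\cup\mathit{Arg}_{\vdash}(\mathcal{S}_2\cap\Theta)$ attacks $a$; (2) if $a\in\mathit{Arg}_{\vdash}(\mathcal{S}_1)$, some $b'\in\mathit{Arg}_{\vdash}(\mathcal{S}_1\cap\Theta)$ attacks $a$.
   Context: $\mathcal{L}$ is the set of formulas of a language built from propositional atoms; $\mathsf{Atoms}(\mathcal{S})$ is the set of atoms occurring in $\mathcal{S}$, and $\mathcal{S}_1\mid\mathcal{S}_2$ means $\mathsf{Atoms}(\mathcal{S}_1)\cap\mathsf{Atoms}(\mathcal{S}_2)=\emptyset$. A setting is $(\vdash,\overline{\cdot},\widehat{\cdot})$ with ${\vdash}\subseteq\wp_{\sf fin}(\mathcal{L})\times\mathcal{L}$ arbitrary, $\overline{\cdot}:\mathcal{L}\to\wp(\mathcal{L})$, $\widehat{\cdot}$ assigning to each nonempty finite set a finite set of formulas, with $\widehat{\emptyset}=\emptyset$. $\mathit{Arg}_{\vdash}(\mathcal{S})=\{(\Gamma,\gamma):\Gamma\subseteq\mathcal{S}\text{ finite},\Gamma\vdash\gamma\}$,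 $\mathsf{Supp}((\Gamma,\gamma))=\Gamma$; $(\Gamma,\gamma)$ attacks $(\Gamma',\gamma')$ iff $\gamma\in\overline{\phi}$ for some $\phi\in\widehat{\Gamma'}$. Pre-Relevance of the setting: (a) for all $\mathcal{S}_1,\mathcal{S}_2,\phi$ with $\mathcal{S}_1\cup\{\phi\}\mid\mathcal{S}_2$, $\mathcal{S}_1\cup\mathcal{S}_2\vdash\phi$ implies $\mathcal{S}_1'\vdash\phi$ for some $\mathcal{S}_1'\subseteq\mathcal{S}_1$; (b) primeness: for all sets of atoms $\mathcal{A}_1\mid\mathcal{A}_2$, all finite $\mathcal{S}_1,\mathcal{T}_1,\mathcal{S}_2,\mathcal{T}_2$ with $\mathsf{Atoms}(\mathcal{S}_i),\mathsf{Atoms}(\mathcal{T}_i)\subseteq\mathcal{A}_i$, and all $\phi,\psi$ with $\psi\in\overline{\phi}$, $\phi\in\widehat{\mathcal{T}_1\cup\mathcal{T}_2}$: if $\mathcal{S}_1\cup\mathcal{S}_2\vdash\psi$ then there are $i\in\{1,2\}$, $\mathcal{S}_i'\subseteq\mathcal{S}_i$, $\phi_i\in\widehat{\mathcal{T}_i}$, $\psi_i\in\overline{\phi_i}$ with $\mathcal{S}_i'\vdash\psi_i$; (c) $\widehat{\Delta}\subseteq\widehat{\Delta\cup\Delta'}$ for all finite $\Delta,\Delta'$. *)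

theory Defs
  imports Main
begin

definition Atoms :: "('f \<Rightarrow> 'a set) \<Rightarrow> 'f set \<Rightarrow> 'a set" where
  "Atoms atoms S = (\<Union>x\<in>S. atoms x)"

definition indep :: "('f \<Rightarrow> 'a set) \<Rightarrow> 'f set \<Rightarrow> 'f set \<Rightarrow> bool" where
  "indep atoms S1 S2 \<longleftrightarrow> Atoms atoms S1 \<inter> Atoms atoms S2 = {}"

definition setting :: "('f set \<Rightarrow> 'f \<Rightarrow> bool) \<Rightarrow> ('f \<Rightarrow> 'f set) \<Rightarrow> ('f set \<Rightarrow> 'f set) \<Rightarrow> bool" where
  "setting vdash bar hat \<longleftrightarrow>
     (\<forall>\<Gamma> \<gamma>. vdash \<Gamma> \<gamma> \<longrightarrow> finite \<Gamma>) \<and>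
     (\<forall>\<Delta>. finite \<Delta> \<longrightarrow> finite (hat \<Delta>)) \<and>
     hat {} = {}"

definition Arg :: "('f set \<Rightarrow> 'f \<Rightarrow> bool) \<Rightarrow> 'f set \<Rightarrow> ('f set \<times> 'f) set" where
  "Arg vdash S = {(\<Gamma>, \<gamma>). \<Gamma> \<subseteq> S \<and> finite \<Gamma> \<and> vdash \<Gamma> \<gamma>}"

definition Supp :: "'f set \<times> 'f \<Rightarrow> 'f set" where
  "Supp a = fst a"

definition attacks :: "('f \<Rightarrow> 'f set) \<Rightarrow> ('f set \<Rightarrow> 'f set) \<Rightarrow> 'f set \<times> 'f \<Rightarrow> 'f set \<times> 'f \<Rightarrow> bool" where
  "attacks bar hat b a \<longleftrightarrow> (\<exists>\<phi>\<in>hat (fst a). snd b \<in> bar \<phi>)"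

definition pre_relevance ::
  "('f \<Rightarrow> 'a set) \<Rightarrow> ('f set \<Rightarrow> 'f \<Rightarrow> bool) \<Rightarrow> ('f \<Rightarrow> 'f set) \<Rightarrow> ('f set \<Rightarrow> 'f set) \<Rightarrow> bool" where
  "pre_relevance atoms vdash bar hat \<longleftrightarrow>
     (\<forall>S1 S2 \<phi>. indep atoms (S1 \<union> {\<phi>}) S2 \<longrightarrow> vdash (S1 \<union> S2) \<phi> \<longrightarrow>
        (\<exists>S1'\<subseteq>S1. vdash S1' \<phi>)) \<and>
     (\<forall>A1 A2 S1 T1 S2 T2 \<phi> \<psi>. A1 \<inter> A2 = {} \<longrightarrow>
        finite S1 \<longrightarrow> finite T1 \<longrightarrow> finite S2 \<longrightarrow> finite T2 \<longrightarrow>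
        Atoms atoms S1 \<subseteq> A1 \<longrightarrow> Atoms atoms T1 \<subseteq> A1 \<longrightarrow>
        Atoms atoms S2 \<subseteq> A2 \<longrightarrow> Atoms atoms T2 \<subseteq> A2 \<longrightarrow>
        \<psi> \<in> bar \<phi> \<longrightarrow> \<phi> \<in> hat (T1 \<union> T2) \<longrightarrow> vdash (S1 \<union> S2) \<psi> \<longrightarrow>
        (\<exists>S1'\<subseteq>S1. \<exists>\<phi>1\<in>hat T1. \<exists>\<psi>1\<in>bar \<phi>1. vdash S1' \<psi>1) \<or>
        (\<exists>S2'\<subseteq>S2. \<exists>\<phi>2\<in>hat T2. \<exists>\<psi>2\<in>bar \<phi>2. vdash S2' \<psi>2)) \<and>
     (\<forall>\<Delta> \<Delta>'. finite \<Delta> \<longrightarrow> finite \<Delta>' \<longrightarrow> hat \<Delta> \<subseteq> hat (\<Delta> \<union> \<Delta>'))"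

end

theory Submission
  imports Defs
begin

lemma Atoms_mono: "X \<subseteq> Y \<Longrightarrow> Atoms atoms X \<subseteq> Atoms atoms Y"
  unfolding Atoms_def by blast

theorem lemma4:
  fixes atoms :: "'f \<Rightarrow> 'a set"
    and vdash :: "'f set \<Rightarrow> 'f \<Rightarrow> bool"
    and bar :: "'f \<Rightarrow> 'f set"
    and hat :: "'f set \<Rightarrow> 'f set"
    and S1 S2 \<Theta> :: "'f set"
    and a b :: "'f set \<times> 'f"
  assumes "setting vdash bar hat"
    and "pre_relevance atoms vdash bar hat"
    and "indep atoms S1 S2"
    and "a \<in> Arg vdash (S1 \<union> S2)"
    and "b \<in> Arg vdash (S1 \<union> S2)"
    and "Supp b = \<Theta>"
    and "attacks bar hat b a"
  shows "(\<exists>b' \<in> Arg vdash (S1 \<inter> \<Theta>) \<union> Arg vdash (S2 \<inter> \<Theta>). attacks bar hat b' a)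
       \<and> (a \<in> Arg vdash S1 \<longrightarrow> (\<exists>b' \<in> Arg vdash (S1 \<inter> \<Theta>). attacks bar hat b' a))"
proof -
  obtain G g where a: "a = (G, g)" by (cases a)
  obtain c where b: "b = (\<Theta>, c)" using assms(6) unfolding Supp_def by (cases b) auto
  have G: "G \<subseteq> S1 \<union> S2" "finite G" using assms(4) a unfolding Arg_def by auto
  have T: "\<Theta> \<subseteq> S1 \<union> S2" "finite \<Theta>" "vdash \<Theta> c" using assms(5) b unfolding Arg_def by auto
  obtain \<phi> where phi: "\<phi> \<in> hat G" "c \<in> bar \<phi>" using assms(7) a b unfolding attacks_def by auto
  have c2: "\<forall>A1 A2 S1 T1 S2 T2 \<phi> \<psi>. A1 \<inter> A2 = {} \<longrightarrow>
        finite S1 \<longrightarrow> finite T1 \<longrightarrow> finite S2 \<longrightarrow> finite T2 \<longrightarrow>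
        Atoms atoms S1 \<subseteq> A1 \<longrightarrow> Atoms atoms T1 \<subseteq> A1 \<longrightarrow>
        Atoms atoms S2 \<subseteq> A2 \<longrightarrow> Atoms atoms T2 \<subseteq> A2 \<longrightarrow>
        \<psi> \<in> bar \<phi> \<longrightarrow> \<phi> \<in> hat (T1 \<union> T2) \<longrightarrow> vdash (S1 \<union> S2) \<psi> \<longrightarrow>
        (\<exists>S1'\<subseteq>S1. \<exists>\<phi>1\<in>hat T1. \<exists>\<psi>1\<in>bar \<phi>1. vdash S1' \<psi>1) \<or>
        (\<exists>S2'\<subseteq>S2. \<exists>\<phi>2\<in>hat T2. \<exists>\<psi>2\<in>bar \<phi>2. vdash S2' \<psi>2)"
    using assms(2) unfolding pre_relevance_def by (elim conjE)
  note prime = c2[rule_format]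
  have c3: "\<forall>D D'. finite D \<longrightarrow> finite D' \<longrightarrow> hat D \<subseteq> hat (D \<union> D')"
    using assms(2) unfolding pre_relevance_def by (elim conjE)
  note mono = c3[rule_format]
  have hat0: "hat {} = {}" using assms(1) unfolding setting_def by blast
  have disj: "Atoms atoms S1 \<inter> Atoms atoms S2 = {}" using assms(3) unfolding indep_def .
  have ThS: "(S1 \<inter> \<Theta>) \<union> (\<Theta> - S1) = \<Theta>" by blast
  have ThS2: "\<Theta> - S1 \<subseteq> S2 \<inter> \<Theta>" using T by blast
  have vd: "vdash ((S1 \<inter> \<Theta>) \<union> (\<Theta> - S1)) c" using T(3) ThS by simp
  have at1: "Atoms atoms (S1 \<inter> \<Theta>) \<subseteq> Atoms atoms S1" by (rule Atoms_mono) blast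
  have at2: "Atoms atoms (\<Theta> - S1) \<subseteq> Atoms atoms S2" by (rule Atoms_mono) (use T in blast)
  have P1: "\<exists>b' \<in> Arg vdash (S1 \<inter> \<Theta>) \<union> Arg vdash (S2 \<inter> \<Theta>). attacks bar hat b' a"
  proof -
    have GG: "(G \<inter> S1) \<union> (G - S1) = G" by blast
    have fG: "finite (G \<inter> S1)" "finite (G - S1)" using G by auto
    have h1: "hat (G \<inter> S1) \<subseteq> hat G" using mono[OF fG] GG by simp
    have h2: "hat (G - S1) \<subseteq> hat G" using mono[OF fG(2) fG(1)] GG by (simp add: Un_commute)
    have q1: "Atoms atoms (G \<inter> S1) \<subseteq> Atoms atoms S1" by (rule Atoms_mono) blast
    have q2: "Atoms atoms (G - S1) \<subseteq> Atoms atoms S2" by (rule Atoms_mono) (use G in blast)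
    have q3: "finite (S1 \<inter> \<Theta>)" "finite (\<Theta> - S1)" using T by auto
    have q4: "\<phi> \<in> hat ((G \<inter> S1) \<union> (G - S1))" using phi GG by simp
    have "(\<exists>S1'\<subseteq>S1 \<inter> \<Theta>. \<exists>\<phi>1\<in>hat (G \<inter> S1). \<exists>\<psi>1\<in>bar \<phi>1. vdash S1' \<psi>1) \<or>
        (\<exists>S2'\<subseteq>\<Theta> - S1. \<exists>\<phi>2\<in>hat (G - S1). \<exists>\<psi>2\<in>bar \<phi>2. vdash S2' \<psi>2)"
      by (rule prime[OF disj q3(1) fG(1) q3(2) fG(2) at1 q1 at2 q2 phi(2) q4 vd])
    then show ?thesis
    proof
      assume "\<exists>S1'\<subseteq>S1 \<inter> \<Theta>. \<exists>\<phi>1\<in>hat (G \<inter> S1). \<exists>\<psi>1\<in>bar \<phi>1. vdash S1' \<psi>1"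
      then obtain S' f p where "S' \<subseteq> S1 \<inter> \<Theta>" "f \<in> hat (G \<inter> S1)" "p \<in> bar f" "vdash S' p" by blast
      moreover have "finite S'" using calculation(1) T(2) finite_subset by blast
      ultimately show ?thesis using h1 a
        by (intro bexI[of _ "(S', p)"]) (auto simp: Arg_def attacks_def)
    next
      assume "\<exists>S2'\<subseteq>\<Theta> - S1. \<exists>\<phi>2\<in>hat (G - S1). \<exists>\<psi>2\<in>bar \<phi>2. vdash S2' \<psi>2"
      then obtain S' f p where "S' \<subseteq> \<Theta> - S1" "f \<in> hat (G - S1)" "p \<in> bar f" "vdash S' p" by blast
      moreover have "finite S'" using calculation(1) T(2) finite_subset by blast
      ultimately show ?thesis using h2 a ThS2
        by (intro bexI[of _ "(S', p)"]) (auto simp: Arg_def attacks_def)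
    qed
  qed
  have P2: "a \<in> Arg vdash S1 \<longrightarrow> (\<exists>b' \<in> Arg vdash (S1 \<inter> \<Theta>). attacks bar hat b' a)"
  proof
    assume "a \<in> Arg vdash S1"
    then have GS: "G \<subseteq> S1" using a unfolding Arg_def by auto
    have q1: "Atoms atoms G \<subseteq> Atoms atoms S1" by (rule Atoms_mono[OF GS])
    have q2: "Atoms atoms {} \<subseteq> Atoms atoms S2" by (rule Atoms_mono) blast
    have q3: "finite (S1 \<inter> \<Theta>)" "finite (\<Theta> - S1)" using T by auto
    have q4: "\<phi> \<in> hat (G \<union> {})" using phi by simp
    have "(\<exists>S1'\<subseteq>S1 \<inter> \<Theta>. \<exists>\<phi>1\<in>hat G. \<exists>\<psi>1\<in>bar \<phi>1. vdash S1' \<psi>1) \<or>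
        (\<exists>S2'\<subseteq>\<Theta> - S1. \<exists>\<phi>2\<in>hat {}. \<exists>\<psi>2\<in>bar \<phi>2. vdash S2' \<psi>2)"
      by (rule prime[OF disj q3(1) G(2) q3(2) finite.emptyI at1 q1 at2 q2 phi(2) q4 vd])
    then obtain S' f p where "S' \<subseteq> S1 \<inter> \<Theta>" "f \<in> hat G" "p \<in> bar f" "vdash S' p"
      using hat0 by blast
    moreover have "finite S'" using calculation(1) T(2) finite_subset by blast
    ultimately show "\<exists>b' \<in> Arg vdash (S1 \<inter> \<Theta>). attacks bar hat b' a" using a
      by (intro bexI[of _ "(S', p)"]) (auto simp: Arg_def attacks_def)
  qed
  show ?thesis using P1 P2 by blast
qed

end
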